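(* Let $(H,\mathcal P)$ be a hypergraph colouring instance with pinnings, $H=(V,\mathcal E)$ with maximum degree $\Delta$, and let $k'\le k$ be integers with $k'\ge 2$ such that $k'\le|e|\le k$ for every $e\in\mathcal E$. Let $t\ge k$ and $q\ge(\mathrm e t\Delta)^{\frac{1}{k'-1}}$. Then for every $v\in V$ and every colour $c\in[q]$, $$\Pr_{\sigma\sim\mu_{\mathcal C}}[\sigma(v)=c]\ge\frac1q\Big(1-\frac1t\Big).$$
   Context: A hypergraph $H=(V,\mathcal E)$ has finite vertex set $V$ and hyperedges $\mathcal E\subseteq 2^V$; its maximum degree $\Delta$ is the maximum number of hyperedges containing a single vertex. For $q\in\mathbb N$, a hypergraph colouring instance with pinnings is a pair $(H,\mathcal P)$ with $\mathcal P=\{P_e\subseteq[q]:e\in\mathcal E\}$. A colouring $\sigma\in[q]^V$ is proper if $|\{\sigma(u):u\in e\}\cup P_e|>1$ for every $e\in\mathcal E$. $\mathcal C$ is the set of proper colourings and $\mu_{\mathcal C}$ the uniform distribution on $\mathcal C$. $\mathrm e$ denotes Euler's number. *)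

theory Defs
  imports "HOL-Analysis.Analysis"
begin

definition colourings :: "'v set \<Rightarrow> nat \<Rightarrow> ('v \<Rightarrow> nat) set" where
  "colourings V q = (V \<rightarrow>\<^sub>E {1..q})"

definition proper_colourings ::
  "'v set \<Rightarrow> 'v set set \<Rightarrow> ('v set \<Rightarrow> nat set) \<Rightarrow> nat \<Rightarrow> ('v \<Rightarrow> nat) set" where
  "proper_colourings V E P q =
     {\<sigma> \<in> colourings V q. \<forall>e\<in>E. card ((\<sigma> ` e) \<union> P e) > 1}"

definition degree :: "'v set set \<Rightarrow> 'v \<Rightarrow> nat" where
  "degree E v = card {e \<in> E. v \<in> e}"

definition max_degree :: "'v set \<Rightarrow> 'v set set \<Rightarrow> nat" where
  "max_degree V E = Max (insert 0 (degree E ` V))"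

definition prob_colour ::
  "'v set \<Rightarrow> 'v set set \<Rightarrow> ('v set \<Rightarrow> nat set) \<Rightarrow> nat \<Rightarrow> 'v \<Rightarrow> nat \<Rightarrow> real" where
  "prob_colour V E P q v c =
     real (card {\<sigma> \<in> proper_colourings V E P q. \<sigma> v = c})
       / real (card (proper_colourings V E P q))"

end

theory Submission
  imports Defs
begin


definition dep :: "('v \<Rightarrow> 'a) set \<Rightarrow> ('v \<Rightarrow> 'a) set \<Rightarrow> 'v set \<Rightarrow> bool" where
  "dep Om B T \<longleftrightarrow> B \<subseteq> Om \<and> (\<forall>\<sigma>\<in>Om. \<forall>\<tau>\<in>Om. (\<forall>u\<in>T. \<sigma> u = \<tau> u) \<longrightarrow> (\<sigma> \<in> B \<longleftrightarrow> \<tau> \<in> B))"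

lemma indep:
  fixes V :: "'v set" and S :: "'a set"
  assumes dB: "dep (V \<rightarrow>\<^sub>E S) B T" and dC: "dep (V \<rightarrow>\<^sub>E S) C (V - T)"
  shows "card (B \<inter> C) * card (V \<rightarrow>\<^sub>E S) = card B * card C"
proof -
  define Om where "Om = V \<rightarrow>\<^sub>E S"
  define mg :: "('v \<Rightarrow> 'a) \<Rightarrow> ('v \<Rightarrow> 'a) \<Rightarrow> ('v \<Rightarrow> 'a)" where
    "mg \<sigma> \<tau> = (\<lambda>u. if u \<in> T then \<sigma> u else \<tau> u)" for \<sigma> \<tau>
  define f where "f p = (mg (fst p) (snd p), mg (snd p) (fst p))" for p
  have ff: "f (f p) = p" for p by (cases p) (auto simp: f_def mg_def fun_eq_iff)
  have inj: "inj f" by (metis ff injI)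
  have mgO: "mg \<sigma> \<tau> \<in> Om" if "\<sigma> \<in> Om" "\<tau> \<in> Om" for \<sigma> \<tau>
    using that by (auto simp: Om_def mg_def PiE_def Pi_def extensional_def)
  have BO: "B \<subseteq> Om" and CO: "C \<subseteq> Om" using dB dC by (auto simp: dep_def Om_def)
  have mgB: "mg \<sigma> \<tau> \<in> B" if "\<sigma> \<in> B" "\<tau> \<in> Om" for \<sigma> \<tau>
  proof -
    have "\<sigma> \<in> Om" using that BO by auto
    moreover have "\<forall>u\<in>T. mg \<sigma> \<tau> u = \<sigma> u" by (simp add: mg_def)
    ultimately show ?thesis using dB that mgO[of \<sigma> \<tau>] unfolding dep_def Om_def by metis
  qed
  have mgC: "mg \<tau> \<sigma> \<in> C" if "\<sigma> \<in> C" "\<tau> \<in> Om" for \<sigma> \<tau>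
  proof -
    have "\<sigma> \<in> Om" using that CO by auto
    moreover have "\<forall>u\<in>V - T. mg \<tau> \<sigma> u = \<sigma> u" by (simp add: mg_def)
    ultimately show ?thesis using dC that mgO[of \<tau> \<sigma>] unfolding dep_def Om_def by metis
  qed
  have img: "f ` ((B \<inter> C) \<times> Om) = B \<times> C"
  proof
    show "f ` ((B \<inter> C) \<times> Om) \<subseteq> B \<times> C"
      using mgB mgC by (auto simp: f_def)
  next
    show "B \<times> C \<subseteq> f ` ((B \<inter> C) \<times> Om)"
    proof
      fix p assume p: "p \<in> B \<times> C"
      then obtain a b where ab: "p = (a, b)" "a \<in> B" "b \<in> C" by auto
      have aO: "a \<in> Om" and bO: "b \<in> Om" using ab BO CO by auto
      have "mg a b \<in> B" using mgB ab bO by auto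
      moreover have "mg a b \<in> C" using mgC[of b a] ab aO by auto
      moreover have "mg b a \<in> Om" using mgO aO bO by auto
      ultimately have "f p \<in> (B \<inter> C) \<times> Om" using ab by (simp add: f_def)
      then show "p \<in> f ` ((B \<inter> C) \<times> Om)" by (metis ff image_eqI)
    qed
  qed
  have "card (B \<times> C) = card ((B \<inter> C) \<times> Om)"
    using img inj by (metis card_image inj_on_subset subset_UNIV)
  then show ?thesis by (simp add: card_cartesian_product Om_def)
qed

locale lll =
  fixes V :: "'v set" and S :: "'a set" and E :: "'v set set"
    and A :: "'v set \<Rightarrow> ('v \<Rightarrow> 'a) set" and x :: real
  assumes finV: "finite V" and finS: "finite S" and Esub: "\<forall>e\<in>E. e \<subseteq> V"
    and x0: "0 \<le> x" and x1: "x < 1"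
    and Adep: "\<forall>g\<in>E. dep (V \<rightarrow>\<^sub>E S) (A g) g"
    and Abound: "\<forall>g\<in>E. \<forall>H\<subseteq>E. g \<notin> H \<longrightarrow>
        real (card (A g)) \<le> x * (1 - x) ^ card {h\<in>H. h \<inter> g \<noteq> {}} * real (card (V \<rightarrow>\<^sub>E S))"
begin

definition Good :: "'v set set \<Rightarrow> ('v \<Rightarrow> 'a) set" where
  "Good F = {\<sigma> \<in> V \<rightarrow>\<^sub>E S. \<forall>f\<in>F. \<sigma> \<notin> A f}"

definition Claim :: "'v set set \<Rightarrow> bool" where
  "Claim F \<longleftrightarrow> (\<forall>T B. T \<subseteq> V \<longrightarrow> dep (V \<rightarrow>\<^sub>E S) B T \<longrightarrow>
     real (card (B \<inter> Good F)) * (1 - x) ^ card {g\<in>F. g \<inter> T \<noteq> {}} * real (card (V \<rightarrow>\<^sub>E S))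
       \<le> real (card B) * real (card (Good F)))"

lemma finOm: "finite (V \<rightarrow>\<^sub>E S)" using finV finS by (simp add: finite_PiE)

lemma finE: "finite E"
proof -
  have "E \<subseteq> Pow V" using Esub by auto
  then show ?thesis using finV finite_subset by blast
qed

lemma GoodO: "Good F \<subseteq> V \<rightarrow>\<^sub>E S" by (auto simp: Good_def)

lemma finGood: "finite (Good F)" using finOm GoodO finite_subset by blast

lemma step:
  assumes C: "Claim H" and HE: "H \<subseteq> E" and g: "g \<in> E" "g \<notin> H"
  shows "(1 - x) * real (card (Good H)) \<le> real (card (Good (insert g H)))"
proof -
  define m where "m = card {h\<in>H. h \<inter> g \<noteq> {}}"
  define Q where "Q = real (card (V \<rightarrow>\<^sub>E S))"
  have gV: "g \<subseteq> V" using Esub g by auto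
  have d: "dep (V \<rightarrow>\<^sub>E S) (A g) g" using Adep g by auto
  have "{h\<in>H. h \<inter> g \<noteq> {}} = {ga\<in>H. ga \<inter> g \<noteq> {}}" by simp
  have c1: "real (card (A g \<inter> Good H)) * (1 - x) ^ m * Q \<le> real (card (A g)) * real (card (Good H))"
    using C gV d unfolding Claim_def m_def Q_def by blast
  have c2: "real (card (A g)) \<le> x * (1 - x) ^ m * Q"
    using Abound g HE unfolding m_def Q_def by blast
  have dec: "Good H = Good (insert g H) \<union> (A g \<inter> Good H)"
    and disj: "Good (insert g H) \<inter> (A g \<inter> Good H) = {}" by (auto simp: Good_def)
  have cardsum: "real (card (Good H)) = real (card (Good (insert g H))) + real (card (A g \<inter> Good H))"
    using card_Un_disjoint[OF finGood[of "insert g H"] _ disj] finGood[of H] dec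
    by (metis finite_Int of_nat_add)
  show ?thesis
  proof (cases "Q = 0")
    case True
    then have "card (V \<rightarrow>\<^sub>E S) = 0" by (simp add: Q_def)
    then have "V \<rightarrow>\<^sub>E S = {}" using finOm by simp
    then have "Good H = {}" using GoodO by blast
    then show ?thesis by simp
  next
    case False
    then have Qp: "Q > 0" by (simp add: Q_def)
    have pp: "(1 - x) ^ m > 0" using x1 by simp
    have "real (card (A g \<inter> Good H)) * ((1 - x) ^ m * Q) \<le> (x * real (card (Good H))) * ((1 - x) ^ m * Q)"
      using c1 c2 mult_right_mono[OF c2, of "real (card (Good H))"]
      by (simp add: algebra_simps)
    then have "real (card (A g \<inter> Good H)) \<le> x * real (card (Good H))"
      using pp Qp by (meson mult_le_cancel_right_pos mult_pos_pos)
    then show ?thesis using cardsum by (simp add: algebra_simps)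
  qed
qed

lemma peel:
  assumes "finite K"
  shows "K \<subseteq> E \<Longrightarrow> F2 \<subseteq> E \<Longrightarrow> K \<inter> F2 = {} \<Longrightarrow> (\<forall>H. F2 \<subseteq> H \<longrightarrow> H \<subset> F2 \<union> K \<longrightarrow> Claim H) \<Longrightarrow>
    (1 - x) ^ card K * real (card (Good F2)) \<le> real (card (Good (F2 \<union> K)))"
  using assms
proof (induction K rule: finite_induct)
  case empty
  then show ?case by simp
next
  case (insert g K)
  have IH: "(1 - x) ^ card K * real (card (Good F2)) \<le> real (card (Good (F2 \<union> K)))"
    using insert.IH insert.prems by blast
  have gn: "g \<notin> F2 \<union> K" using insert by blast
  have ps: "F2 \<union> K \<subset> F2 \<union> insert g K" using gn by blast
  have Cl: "Claim (F2 \<union> K)" using insert.prems(4) ps by simp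
  have st: "(1 - x) * real (card (Good (F2 \<union> K))) \<le> real (card (Good (insert g (F2 \<union> K))))"
    using step[OF Cl] insert.prems gn by blast
  have "(1 - x) ^ card (insert g K) * real (card (Good F2)) = (1 - x) * ((1 - x) ^ card K * real (card (Good F2)))"
    using insert.hyps by simp
  also have "\<dots> \<le> (1 - x) * real (card (Good (F2 \<union> K)))"
    using IH x1 by (intro mult_left_mono) auto
  also have "\<dots> \<le> real (card (Good (F2 \<union> insert g K)))" using st by simp
  finally show ?case .
qed

lemma claim_all: "F \<subseteq> E \<Longrightarrow> Claim F"
proof -
  have "finite F" if "F \<subseteq> E" for F using that finE finite_subset by blast
  have "finite F \<Longrightarrow> F \<subseteq> E \<longrightarrow> Claim F" for F
  proof (induction F rule: finite_psubset_induct)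
    case (psubset F)
    show ?case
    proof
      assume FE: "F \<subseteq> E"
      show "Claim F" unfolding Claim_def
      proof (intro allI impI)
        fix T B assume TV: "T \<subseteq> V" and dB: "dep (V \<rightarrow>\<^sub>E S) B T"
        define F1 where "F1 = {g\<in>F. g \<inter> T \<noteq> {}}"
        define F2 where "F2 = F - F1"
        define Q where "Q = real (card (V \<rightarrow>\<^sub>E S))"
        have BO: "B \<subseteq> V \<rightarrow>\<^sub>E S" using dB by (simp add: dep_def)
        have finB: "finite B" using BO finOm finite_subset by blast
        have sub: "B \<inter> Good F \<subseteq> B \<inter> Good F2" by (auto simp: Good_def F2_def)
        have a1: "real (card (B \<inter> Good F)) \<le> real (card (B \<inter> Good F2))"
          using sub finB by (simp add: card_mono)
        have dG: "dep (V \<rightarrow>\<^sub>E S) (Good F2) (V - T)"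
          unfolding dep_def
        proof (intro conjI ballI impI)
          show "Good F2 \<subseteq> V \<rightarrow>\<^sub>E S" by (rule GoodO)
        next
          fix \<sigma> \<tau> assume s: "\<sigma> \<in> V \<rightarrow>\<^sub>E S" and t: "\<tau> \<in> V \<rightarrow>\<^sub>E S"
            and ag: "\<forall>u\<in>V - T. \<sigma> u = \<tau> u"
          have "\<sigma> \<in> A f \<longleftrightarrow> \<tau> \<in> A f" if f: "f \<in> F2" for f
          proof -
            have fE: "f \<in> E" using f FE F2_def by auto
            have "f \<subseteq> V - T" using f Esub fE by (auto simp: F2_def F1_def)
            then have "\<forall>u\<in>f. \<sigma> u = \<tau> u" using ag by auto
            then show ?thesis using Adep fE s t unfolding dep_def by blast
          qed
          then show "\<sigma> \<in> Good F2 \<longleftrightarrow> \<tau> \<in> Good F2" using s t by (auto simp: Good_def)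
        qed
        have a2: "real (card (B \<inter> Good F2)) * Q = real (card B) * real (card (Good F2))"
          using indep[OF dB dG] unfolding Q_def by (metis of_nat_mult)
        have FU: "F2 \<union> F1 = F" by (auto simp: F2_def F1_def)
        have a3: "(1 - x) ^ card F1 * real (card (Good F2)) \<le> real (card (Good F))"
          using peel[of F1 F2] psubset FE FU by (auto simp: F1_def F2_def)
        have "real (card (B \<inter> Good F)) * (1 - x) ^ card F1 * Q
            \<le> real (card (B \<inter> Good F2)) * Q * (1 - x) ^ card F1"
          using a1 x1 by (simp add: Q_def mult.commute mult.left_commute mult_left_mono)
        also have "\<dots> = real (card B) * ((1 - x) ^ card F1 * real (card (Good F2)))"
          using a2 by simp
        also have "\<dots> \<le> real (card B) * real (card (Good F))"
          using a3 by (intro mult_left_mono) auto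
        finally show "real (card (B \<inter> Good F)) * (1 - x) ^ card {g\<in>F. g \<inter> T \<noteq> {}} * real (card (V \<rightarrow>\<^sub>E S))
           \<le> real (card B) * real (card (Good F))" by (simp add: F1_def Q_def)
      qed
    qed
  qed
  then show "F \<subseteq> E \<Longrightarrow> Claim F" using finE finite_subset by blast
qed

lemma good_pos: "(1 - x) ^ card E * real (card (V \<rightarrow>\<^sub>E S)) \<le> real (card (Good E))"
proof -
  have "Good {} = V \<rightarrow>\<^sub>E S" by (simp add: Good_def)
  moreover have "\<forall>H. {} \<subseteq> H \<longrightarrow> H \<subset> {} \<union> E \<longrightarrow> Claim H" using claim_all by blast
  ultimately show ?thesis using peel[of E "{}"] finE by simp
qed

end



lemma card_fix:
  assumes "finite V" "T \<subseteq> V" "a \<in> S"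
  shows "card {\<sigma> \<in> V \<rightarrow>\<^sub>E S. \<forall>u\<in>T. \<sigma> u = a} = card S ^ (card V - card T)"
proof -
  have "{\<sigma> \<in> V \<rightarrow>\<^sub>E S. \<forall>u\<in>T. \<sigma> u = a} = PiE V (\<lambda>u. if u \<in> T then {a} else S)"
    using assms by (auto simp: PiE_def Pi_def split: if_splits)
  then have "card {\<sigma> \<in> V \<rightarrow>\<^sub>E S. \<forall>u\<in>T. \<sigma> u = a} = (\<Prod>u\<in>V. card (if u \<in> T then {a} else S))"
    using assms by (simp add: card_PiE)
  also have "\<dots> = (\<Prod>u\<in>V. if u \<in> T then 1 else card S)"
    by (rule prod.cong) auto
  also have "\<dots> = card S ^ card (V - T)"
    using assms by (simp add: prod.If_cases Diff_eq[symmetric] Int_absorb1 Int_commute)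
  also have "card (V - T) = card V - card T" using assms by (meson card_Diff_subset finite_subset)
  finally show ?thesis .
qed

lemma exp_bound:
  fixes D :: nat assumes "D \<ge> 1"
  shows "exp 1 * (1 - 1 / real D) ^ (D - 1) \<ge> 1"
proof -
  define n where "n = D - 1"
  have Dn: "real D = real n + 1" using assms n_def by simp
  have "(1 + 1 / real n) ^ n \<le> exp (1 / real n) ^ n"
    by (intro power_mono) (auto simp: exp_ge_add_one_self add_nonneg_nonneg)
  also have "\<dots> \<le> exp 1"
  proof (cases "n = 0")
    case True then show ?thesis by simp
  next
    case False
    have "exp (1 / real n) ^ n = exp (real n * (1 / real n))" by (simp only: exp_of_nat_mult)
    also have "real n * (1 / real n) = 1" using False by simp
    finally show ?thesis by simp
  qed
  finally have h: "(1 + 1 / real n) ^ n \<le> exp 1" .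
  have "(1 - 1 / real D) ^ (D - 1) * (1 + 1 / real n) ^ n = 1"
  proof (cases "n = 0")
    case True then show ?thesis using Dn n_def by simp
  next
    case False
    have np: "real n > 0" using False by simp
    have nn: "real n + real n * real n \<noteq> 0" using np by (metis add_pos_pos mult_pos_pos less_irrefl)
    have "(1 - 1 / real D) * (1 + 1 / real n) = (real n / (real n + 1)) * ((real n + 1) / real n)"
      using Dn np by (simp add: field_simps)
    also have "\<dots> = 1" using np nn by (simp add: field_simps)
    finally have "(1 - 1 / real D) * (1 + 1 / real n) = 1" .
    then show ?thesis by (metis n_def power_mult_distrib power_one)
  qed
  moreover have "(1 - 1 / real D) ^ (D - 1) \<ge> 0" using Dn by simp
  ultimately show ?thesis using h by (metis mult_left_mono mult.commute)
qed

theorem lemma2p4: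
  fixes V :: "'v set" and E :: "'v set set" and P :: "'v set \<Rightarrow> nat set"
    and q k k' :: nat and t :: real and v :: 'v and c :: nat
  assumes "finite V"
    and "\<forall>e\<in>E. e \<subseteq> V"
    and "\<forall>e\<in>E. P e \<subseteq> {1..q}"
    and "2 \<le> k'" and "k' \<le> k"
    and "\<forall>e\<in>E. k' \<le> card e \<and> card e \<le> k"
    and "real k \<le> t"
    and "real q \<ge> (exp 1 * t * real (max_degree V E)) powr (1 / (real k' - 1))"
    and "v \<in> V" and "c \<in> {1..q}"
  shows "prob_colour V E P q v c \<ge> (1 / real q) * (1 - 1 / t)"
proof -
  note finV = assms(1) and Esub = assms(2) and Pq = assms(3) and kk = assms(4,5)
    and ecard = assms(6) and tk = assms(7) and qbig = assms(8) and vV = assms(9) and cq = assms(10)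
  define \<Delta> where "\<Delta> = max_degree V E"
  define D where "D = k * \<Delta>"
  define x where "x = 1 / real D"
  define Om where "Om = V \<rightarrow>\<^sub>E {1..q}"
  define A where "A g = {\<sigma> \<in> Om. card (\<sigma> ` g \<union> P g) \<le> 1}" for g
  have q1: "q \<ge> 1" using cq by simp
  have k2: "k \<ge> 2" using kk by simp
  have t2: "t \<ge> 2" using k2 tk by linarith
  have finE: "finite E"
  proof -
    have "E \<subseteq> Pow V" using Esub by auto
    then show ?thesis using finV finite_subset by blast
  qed
  have degle: "degree E u \<le> \<Delta>" if "u \<in> V" for u
    unfolding \<Delta>_def max_degree_def using that finV by (intro Max_ge) auto
  have nbr: "card {h\<in>E. h \<inter> T \<noteq> {}} \<le> card T * \<Delta>" if TV: "T \<subseteq> V" for T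
  proof -
    have finT: "finite T" using TV finV finite_subset by blast
    have "{h\<in>E. h \<inter> T \<noteq> {}} = (\<Union>u\<in>T. {h\<in>E. u \<in> h})" by auto
    then have "card {h\<in>E. h \<inter> T \<noteq> {}} \<le> (\<Sum>u\<in>T. card {h\<in>E. u \<in> h})"
      using card_UN_le[OF finT] by simp
    also have "\<dots> \<le> (\<Sum>u\<in>T. \<Delta>)"
      using degle TV by (intro sum_mono) (auto simp: degree_def)
    also have "\<dots> = card T * \<Delta>" by simp
    finally show ?thesis .
  qed
  have gne: "g \<noteq> {}" if "g \<in> E" for g
    using ecard that kk by (metis card.empty le_zero_eq numeral_le_iff not_numeral_le_zero order.trans)
  have Dpos: "\<Delta> \<ge> 1" if En: "E \<noteq> {}"
  proof -
    obtain g where g: "g \<in> E" using En by blast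
    obtain u where u: "u \<in> g" using gne[OF g] by blast
    have uV: "u \<in> V" using u g Esub by auto
    have "{h\<in>E. u \<in> h} \<noteq> {}" using g u by blast
    moreover have "finite {h\<in>E. u \<in> h}" using finE by simp
    ultimately have "degree E u \<ge> 1" unfolding degree_def
      by (metis One_nat_def Suc_leI card_gt_0_iff)
    then show ?thesis using degle[OF uV] by simp
  qed
  have x0: "0 \<le> x" by (simp add: x_def)
  have x1: "x < 1"
  proof (cases "\<Delta> = 0")
    case True then show ?thesis by (simp add: x_def D_def)
  next
    case False
    then have "D \<ge> 2" using k2 by (simp add: D_def) (metis One_nat_def Suc_leI mult_le_mono neq0_conv nat_mult_1_right)
    then show ?thesis by (simp add: x_def)
  qed
  have ebnd: "exp 1 * (1 - x) ^ (D - 1) \<ge> 1" if "E \<noteq> {}"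
  proof -
    have "D \<ge> 1" using Dpos[OF that] k2 by (simp add: D_def)
    then show ?thesis using exp_bound[of D] by (simp add: x_def)
  qed
  have xD: "x * real D = 1" if "E \<noteq> {}"
  proof -
    have "D \<ge> 1" using Dpos[OF that] k2 by (simp add: D_def)
    then show ?thesis by (simp add: x_def)
  qed
  have qpow: "real q ^ (card e - 1) \<ge> exp 1 * t * real \<Delta>" if e: "e \<in> E" for e
  proof -
    define y where "y = exp 1 * t * real \<Delta>"
    have "\<Delta> \<ge> 1" using Dpos e by blast
    then have "real \<Delta> > 0" by simp
    moreover have "t > 0" using t2 by simp
    ultimately have yp: "y > 0" by (simp add: y_def)
    have kp: "real k' - 1 > 0" using kk by simp
    have n: "real k' - 1 = real (k' - 1)" using kk by simp
    have "y = (y powr (1 / (real k' - 1))) powr (real k' - 1)"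
      using kp yp by (simp add: powr_powr)
    also have "\<dots> = (y powr (1 / (real k' - 1))) powr (real (k' - 1))"
      by (simp only: n)
    also have "\<dots> = (y powr (1 / (real k' - 1))) ^ (k' - 1)"
      using yp by (intro powr_realpow) simp
    also have "\<dots> \<le> real q ^ (k' - 1)"
      using qbig by (intro power_mono) (auto simp: y_def \<Delta>_def)
    also have "\<dots> \<le> real q ^ (card e - 1)"
      using q1 ecard e by (intro power_increasing) auto
    finally show ?thesis by (simp add: y_def)
  qed
  have cardOm: "card Om = q ^ card V"
    using card_fix[OF finV, of "{}" 1 "{1..q}"] q1 by (simp add: Om_def)
  have Adep: "\<forall>g\<in>E. dep (V \<rightarrow>\<^sub>E {1..q}) (A g) g"
  proof
    fix g assume "g \<in> E"
    show "dep (V \<rightarrow>\<^sub>E {1..q}) (A g) g"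
      unfolding dep_def
    proof (intro conjI ballI impI)
      show "A g \<subseteq> V \<rightarrow>\<^sub>E {1..q}" by (auto simp: A_def Om_def)
    next
      fix \<sigma> \<tau> assume "\<sigma> \<in> V \<rightarrow>\<^sub>E {1..q}" "\<tau> \<in> V \<rightarrow>\<^sub>E {1..q}" "\<forall>u\<in>g. \<sigma> u = \<tau> u"
      then show "\<sigma> \<in> A g \<longleftrightarrow> \<tau> \<in> A g"
        by (simp add: A_def Om_def cong: image_cong)
    qed
  qed
  have cardA: "card (A g) \<le> q * q ^ (card V - card g)" if g: "g \<in> E" for g
  proof -
    have gV: "g \<subseteq> V" using g Esub by auto
    have "A g \<subseteq> (\<Union>a\<in>{1..q}. {\<sigma> \<in> Om. \<forall>u\<in>g. \<sigma> u = a})"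
    proof
      fix \<sigma> assume s: "\<sigma> \<in> A g"
      obtain u0 where u0: "u0 \<in> g" using gne[OF g] by blast
      have sO: "\<sigma> \<in> Om" using s by (simp add: A_def)
      have a: "\<sigma> u0 \<in> {1..q}" using sO u0 gV by (auto simp: Om_def)
      have fin: "finite (\<sigma> ` g \<union> P g)"
        using gV finV Pq g by (meson finite_Un finite_atLeastAtMost finite_imageI finite_subset)
      have "\<forall>a\<in>\<sigma> ` g \<union> P g. \<forall>b\<in>\<sigma> ` g \<union> P g. a = b"
        using s fin card_le_Suc0_iff_eq[OF fin] by (simp add: A_def)
      then have "\<forall>u\<in>g. \<sigma> u = \<sigma> u0" using u0 by blast
      then show "\<sigma> \<in> (\<Union>a\<in>{1..q}. {\<sigma> \<in> Om. \<forall>u\<in>g. \<sigma> u = a})" using a sO by blast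
    qed
    then have "card (A g) \<le> card (\<Union>a\<in>{1..q}. {\<sigma> \<in> Om. \<forall>u\<in>g. \<sigma> u = a})"
      using finV by (intro card_mono) (auto simp: Om_def finite_PiE)
    also have "\<dots> \<le> (\<Sum>a\<in>{1..q}. card {\<sigma> \<in> Om. \<forall>u\<in>g. \<sigma> u = a})"
      by (rule card_UN_le) simp
    also have "\<dots> = (\<Sum>a\<in>{1..q}. q ^ (card V - card g))"
    proof (rule sum.cong)
      fix a assume "a \<in> {1..q}"
      then show "card {\<sigma> \<in> Om. \<forall>u\<in>g. \<sigma> u = a} = q ^ (card V - card g)"
        using card_fix[OF finV gV, of a "{1..q}"] by (simp add: Om_def)
    qed simp
    also have "\<dots> = q * q ^ (card V - card g)" by simp
    finally show ?thesis .
  qed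
  have Abound: "\<forall>g\<in>E. \<forall>H\<subseteq>E. g \<notin> H \<longrightarrow>
        real (card (A g)) \<le> x * (1 - x) ^ card {h\<in>H. h \<inter> g \<noteq> {}} * real (card (V \<rightarrow>\<^sub>E {1..q}))"
  proof (intro ballI allI impI)
    fix g H assume g: "g \<in> E" and HE: "H \<subseteq> E" and gH: "g \<notin> H"
    have En: "E \<noteq> {}" using g by blast
    have gV: "g \<subseteq> V" using g Esub by auto
    define m where "m = card {h\<in>H. h \<inter> g \<noteq> {}}"
    have "m \<le> D - 1"
    proof -
      have sub: "{h\<in>H. h \<inter> g \<noteq> {}} \<subseteq> {h\<in>E. h \<inter> g \<noteq> {}} - {g}" using HE gH by auto
      have gin: "g \<in> {h\<in>E. h \<inter> g \<noteq> {}}" using g gne[OF g] by auto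
      have "m \<le> card ({h\<in>E. h \<inter> g \<noteq> {}} - {g})"
        unfolding m_def using sub finE by (intro card_mono) auto
      also have "\<dots> = card {h\<in>E. h \<inter> g \<noteq> {}} - 1" using gin finE by simp
      also have "\<dots> \<le> card g * \<Delta> - 1" using nbr[OF gV] by simp
      also have "\<dots> \<le> D - 1"
      proof -
        have "card g * \<Delta> \<le> k * \<Delta>" using ecard g by (simp add: mult_right_mono)
        then show ?thesis unfolding D_def by (rule diff_le_mono)
      qed
      finally show ?thesis .
    qed
    have g1: "card g \<ge> 1" using ecard g kk by auto
    have gVc: "card g \<le> card V" using gV finV card_mono by blast
    define R where "R = real q * real q ^ (card V - card g)"
    have R0: "R \<ge> 0" by (simp add: R_def)
    have QR: "real (card (V \<rightarrow>\<^sub>E {1..q})) = real q ^ (card g - 1) * R"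
    proof -
      have "card V = (card g - 1) + (1 + (card V - card g))" using g1 gVc by simp
      then have "real q ^ card V = real q ^ (card g - 1) * (real q * real q ^ (card V - card g))"
        by (metis power_add power_one_right)
      then show ?thesis using cardOm by (simp add: Om_def R_def)
    qed
    have omx: "1 - x \<ge> 0" "1 - x \<le> 1" using x0 x1 by auto
    have "x * (1 - x) ^ m * real q ^ (card g - 1) \<ge> x * (1 - x) ^ (D - 1) * (exp 1 * t * real \<Delta>)"
      using \<open>m \<le> D - 1\<close> omx x0 qpow[OF g] t2
      by (intro mult_mono power_decreasing) auto
    moreover have "exp 1 * t * real \<Delta> \<ge> exp 1 * real D"
      using tk by (simp add: D_def mult_right_mono)
    moreover have "x * (1 - x) ^ (D - 1) \<ge> 0" using omx x0 by simp
    ultimately have "x * (1 - x) ^ m * real q ^ (card g - 1) \<ge> x * (1 - x) ^ (D - 1) * (exp 1 * real D)"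
      by (meson mult_left_mono order_trans)
    also have "x * (1 - x) ^ (D - 1) * (exp 1 * real D) = exp 1 * (1 - x) ^ (D - 1) * (x * real D)"
      by (simp add: algebra_simps)
    also have "\<dots> = exp 1 * (1 - x) ^ (D - 1)" using xD[OF En] by simp
    finally have Z: "x * (1 - x) ^ m * real q ^ (card g - 1) \<ge> 1" using ebnd[OF En] by linarith
    have "real (card (A g)) \<le> R" using cardA[OF g] unfolding R_def by (metis of_nat_le_iff of_nat_mult of_nat_power)
    also have "\<dots> \<le> (x * (1 - x) ^ m * real q ^ (card g - 1)) * R" using mult_right_mono[OF Z R0] by simp
    also have "\<dots> = x * (1 - x) ^ m * real (card (V \<rightarrow>\<^sub>E {1..q}))" using QR by simp
    finally show "real (card (A g)) \<le> x * (1 - x) ^ card {h\<in>H. h \<inter> g \<noteq> {}} * real (card (V \<rightarrow>\<^sub>E {1..q}))"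
      by (simp add: m_def)
  qed
  interpret L: lll V "{1..q}" E A x
    using finV Esub x0 x1 Adep Abound by unfold_locales auto
  have UG: "proper_colourings V E P q = L.Good E"
    unfolding proper_colourings_def colourings_def L.Good_def A_def Om_def by (auto simp: not_le)
  define U where "U = L.Good E"
  have UO: "U \<subseteq> Om" using L.GoodO by (simp add: U_def Om_def)
  have finOm: "finite Om" using finV by (simp add: Om_def finite_PiE)
  have finU: "finite U" using UO finOm finite_subset by blast
  have Upos: "real (card U) > 0"
  proof -
    have "(1 - x) ^ card E * real (card Om) \<le> real (card U)"
      using L.good_pos by (simp add: U_def Om_def)
    moreover have "(1 - x) ^ card E > 0" using x1 by simp
    moreover have "real (card Om) > 0" using cardOm q1 by simp
    ultimately show ?thesis by (meson mult_pos_pos order_less_le_trans)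
  qed
  define Ev where "Ev = {e\<in>E. v \<in> e}"
  define Fx where "Fx e = {\<sigma> \<in> Om. \<forall>u\<in>e - {v}. \<sigma> u = c}" for e
  define W where "W = U - (\<Union>e\<in>Ev. Fx e)"
  define Wc where "Wc = {\<tau> \<in> W. \<tau> v = c}"
  have finEv: "finite Ev" using finE by (simp add: Ev_def)
  have tpos: "t > 0" using t2 by simp
  have a: "real (card (Fx e \<inter> U)) * (t * real \<Delta>) \<le> real (card U)" if e: "e \<in> Ev" for e
  proof -
    have eE: "e \<in> E" and ve: "v \<in> e" using e by (auto simp: Ev_def)
    have En: "E \<noteq> {}" using eE by blast
    define T where "T = e - {v}"
    have TV: "T \<subseteq> V" using Esub eE by (auto simp: T_def)
    have eV: "e \<subseteq> V" using Esub eE by auto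
    have finT: "finite e" using eV finV finite_subset by blast
    have cT: "card T = card e - 1" using ve finT by (simp add: T_def)
    have dF: "dep (V \<rightarrow>\<^sub>E {1..q}) (Fx e) T"
      unfolding dep_def Fx_def Om_def T_def by auto
    define m where "m = card {g\<in>E. g \<inter> T \<noteq> {}}"
    have Cl: "real (card (Fx e \<inter> L.Good E)) * (1 - x) ^ m * real (card (V \<rightarrow>\<^sub>E {1..q}))
       \<le> real (card (Fx e)) * real (card (L.Good E))"
      using L.claim_all[of E] TV dF unfolding L.Claim_def m_def by blast
    have m: "m \<le> D - 1"
    proof -
      have "m \<le> card T * \<Delta>" using nbr[OF TV] by (simp add: m_def)
      also have "\<dots> \<le> (k - 1) * \<Delta>"
      proof -
        have "card T \<le> k - 1" using cT ecard eE by (metis diff_le_mono)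
        then show ?thesis by (rule mult_right_mono) simp
      qed
      also have "\<dots> \<le> D - 1" using Dpos[OF En] k2 by (simp add: D_def diff_mult_distrib)
      finally show ?thesis .
    qed
    have cF: "card (Fx e) = q ^ (card V - card T)"
      using card_fix[OF finV TV, of c "{1..q}"] cq by (simp add: Fx_def Om_def T_def)
    have TVc: "card T \<le> card V" using TV finV card_mono by blast
    have cO: "real (card (V \<rightarrow>\<^sub>E {1..q})) = real q ^ card T * real q ^ (card V - card T)"
      using cardOm TVc by (simp add: Om_def flip: power_add)
    have qp: "real q ^ (card V - card T) > 0" using q1 by simp
    have "real (card (Fx e \<inter> U)) * ((1 - x) ^ m * real q ^ card T) * real q ^ (card V - card T)
        \<le> real (card U) * real q ^ (card V - card T)"
      using Cl cF cO by (simp add: U_def algebra_simps)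
    then have b1: "real (card (Fx e \<inter> U)) * ((1 - x) ^ m * real q ^ card T) \<le> real (card U)"
      using qp by simp
    have omx: "1 - x \<ge> 0" "1 - x \<le> 1" using x0 x1 by auto
    have "(1 - x) ^ m * real q ^ card T \<ge> (1 - x) ^ (D - 1) * (exp 1 * t * real \<Delta>)"
      using m omx qpow[OF eE] cT tpos by (intro mult_mono power_decreasing) auto
    moreover have "(1 - x) ^ (D - 1) * (exp 1 * t * real \<Delta>) = (exp 1 * (1 - x) ^ (D - 1)) * (t * real \<Delta>)"
      by (simp add: algebra_simps)
    moreover have "(exp 1 * (1 - x) ^ (D - 1)) * (t * real \<Delta>) \<ge> t * real \<Delta>"
      using mult_right_mono[OF ebnd[OF En], of "t * real \<Delta>"] tpos by simp
    ultimately have "(1 - x) ^ m * real q ^ card T \<ge> t * real \<Delta>" by linarith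
    then have "real (card (Fx e \<inter> U)) * (t * real \<Delta>) \<le> real (card (Fx e \<inter> U)) * ((1 - x) ^ m * real q ^ card T)"
      by (intro mult_left_mono) auto
    then show ?thesis using b1 by linarith
  qed
  have b: "real (card (U \<inter> (\<Union>e\<in>Ev. Fx e))) * t \<le> real (card U)"
  proof (cases "Ev = {}")
    case True then show ?thesis by simp
  next
    case False
    then have En: "E \<noteq> {}" by (auto simp: Ev_def)
    have Dp: "real \<Delta> > 0" using Dpos[OF En] by simp
    have "card (U \<inter> (\<Union>e\<in>Ev. Fx e)) = card (\<Union>e\<in>Ev. Fx e \<inter> U)" by (metis Int_commute UN_extend_simps(4) inf_commute) 
    also have "\<dots> \<le> (\<Sum>e\<in>Ev. card (Fx e \<inter> U))" by (rule card_UN_le[OF finEv])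
    finally have "real (card (U \<inter> (\<Union>e\<in>Ev. Fx e))) \<le> (\<Sum>e\<in>Ev. real (card (Fx e \<inter> U)))"
      by (metis of_nat_le_iff of_nat_sum)
    also have "\<dots> \<le> (\<Sum>e\<in>Ev. real (card U) / (t * real \<Delta>))"
      using a tpos Dp by (intro sum_mono) (simp add: pos_le_divide_eq)
    also have "\<dots> = real (card Ev) * (real (card U) / (t * real \<Delta>))" by simp
    also have "\<dots> \<le> real \<Delta> * (real (card U) / (t * real \<Delta>))"
    proof -
      have "card Ev \<le> \<Delta>" using degle[OF vV] by (simp add: Ev_def degree_def)
      then show ?thesis using tpos Dp by (intro mult_right_mono) auto
    qed
    also have "\<dots> = real (card U) / t" using Dp by (simp add: field_simps)
    finally show ?thesis using tpos by (simp add: pos_le_divide_eq)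
  qed
  have c: "card U = card W + card (U \<inter> (\<Union>e\<in>Ev. Fx e))"
  proof -
    have "U = W \<union> (U \<inter> (\<Union>e\<in>Ev. Fx e))" "W \<inter> (U \<inter> (\<Union>e\<in>Ev. Fx e)) = {}" by (auto simp: W_def)
    then show ?thesis using finU by (metis card_Un_disjoint finite_Int finite_Un)
  qed
  have upd: "\<sigma>(v := c) \<in> W" if s: "\<sigma> \<in> W" for \<sigma>
  proof -
    have sU: "\<sigma> \<in> U" and sF: "\<forall>e\<in>Ev. \<sigma> \<notin> Fx e" using s by (auto simp: W_def)
    have sO: "\<sigma> \<in> Om" using sU UO by auto
    have sP: "\<sigma> \<in> proper_colourings V E P q" using sU UG U_def by simp
    have uO: "\<sigma>(v := c) \<in> Om" using sO vV cq by (auto simp: Om_def PiE_def Pi_def extensional_def)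
    have uF: "\<sigma>(v := c) \<notin> Fx e" if e: "e \<in> Ev" for e
      using sF e uO sO by (auto simp: Fx_def)
    have "\<not> card (\<sigma>(v := c) ` g \<union> P g) \<le> 1" if g: "g \<in> E" for g
    proof (cases "v \<in> g")
      case False
      then have "\<sigma>(v := c) ` g = \<sigma> ` g" by auto
      moreover have "\<not> card (\<sigma> ` g \<union> P g) \<le> 1" using sP g by (auto simp: proper_colourings_def)
      ultimately show ?thesis by simp
    next
      case True
      then have "g \<in> Ev" using g by (simp add: Ev_def)
      then have "\<sigma> \<notin> Fx g" using sF by auto
      then obtain u where u: "u \<in> g" "u \<noteq> v" "\<sigma> u \<noteq> c" using sO by (auto simp: Fx_def)
      have gV: "g \<subseteq> V" using g Esub by auto
      have fin: "finite (\<sigma>(v := c) ` g \<union> P g)"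
        using gV finV Pq g by (meson finite_Un finite_atLeastAtMost finite_imageI finite_subset)
      have "\<sigma> u \<in> \<sigma>(v := c) ` g \<union> P g" using u by (metis UnI1 fun_upd_other image_eqI)
      moreover have "c \<in> \<sigma>(v := c) ` g \<union> P g" using True by (metis UnI1 fun_upd_same image_eqI)
      ultimately show ?thesis using u(3) card_le_Suc0_iff_eq[OF fin] by auto
    qed
    then have "\<sigma>(v := c) \<in> proper_colourings V E P q" using uO by (auto simp: proper_colourings_def colourings_def Om_def not_le)
    then have "\<sigma>(v := c) \<in> U" using UG U_def by simp
    then show ?thesis using uF by (auto simp: W_def)
  qed
  have d: "card W \<le> card Wc * q"
  proof -
    have "W \<subseteq> (\<Union>\<tau>\<in>Wc. (\<lambda>a. \<tau>(v := a)) ` {1..q})"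
    proof
      fix \<sigma> assume s: "\<sigma> \<in> W"
      have "\<sigma> \<in> Om" using s UO by (auto simp: W_def)
      then have sv: "\<sigma> v \<in> {1..q}" using vV by (auto simp: Om_def)
      have "\<sigma>(v := c) \<in> Wc" using upd[OF s] by (simp add: Wc_def)
      moreover have "\<sigma> = (\<sigma>(v := c))(v := \<sigma> v)" by simp
      ultimately show "\<sigma> \<in> (\<Union>\<tau>\<in>Wc. (\<lambda>a. \<tau>(v := a)) ` {1..q})" using sv by blast
    qed
    moreover have "finite Wc" using finU by (simp add: Wc_def W_def)
    moreover have "finite (\<Union>\<tau>\<in>Wc. (\<lambda>a. \<tau>(v := a)) ` {1..q})" using \<open>finite Wc\<close> by simp
    ultimately have "card W \<le> card (\<Union>\<tau>\<in>Wc. (\<lambda>a. \<tau>(v := a)) ` {1..q})"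
      using card_mono by blast
    also have "\<dots> \<le> (\<Sum>\<tau>\<in>Wc. card ((\<lambda>a. \<tau>(v := a)) ` {1..q}))"
      using \<open>finite Wc\<close> by (rule card_UN_le)
    also have "\<dots> \<le> (\<Sum>\<tau>\<in>Wc. q)"
    proof (rule sum_mono)
      fix \<tau> show "card ((\<lambda>a. \<tau>(v := a)) ` {1..q}) \<le> q"
        using card_image_le[of "{1..q}" "\<lambda>a. \<tau>(v := a)"] by simp
    qed
    finally show ?thesis by simp
  qed
  have e: "card Wc \<le> card {\<sigma> \<in> U. \<sigma> v = c}"
    using finU by (intro card_mono) (auto simp: Wc_def W_def)
  have qp: "real q > 0" using q1 by simp
  define X where "X = card (U \<inter> (\<Union>e\<in>Ev. Fx e))"
  define N where "N = card {\<sigma> \<in> U. \<sigma> v = c}"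
  have cU: "real (card U) = real (card W) + real X" using c by (simp add: X_def)
  have bX: "real X \<le> real (card U) / t" using b tpos by (simp add: pos_le_divide_eq X_def)
  have "real (card U) * (1 - 1 / t) = real (card U) - real (card U) / t" by (simp add: algebra_simps)
  then have g1: "real (card U) * (1 - 1 / t) \<le> real (card W)" using cU bX by linarith
  have "card W \<le> N * q" using d e unfolding N_def by (meson mult_le_mono1 order_trans)
  then have "real (card W) \<le> real N * real q" by (metis of_nat_le_iff of_nat_mult)
  then have f: "real (card U) * (1 - 1 / t) \<le> real N * real q" using g1 by linarith
  then have f2: "real (card U) * (1 - 1 / t) / real q \<le> real N" using qp by (simp add: pos_divide_le_eq)
  have "prob_colour V E P q v c = real N / real (card U)"
    by (simp add: prob_colour_def UG U_def N_def)
  moreover have "(1 / real q) * (1 - 1 / t) \<le> real N / real (card U)"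
  proof -
    have "(1 / real q) * (1 - 1 / t) * real (card U) = real (card U) * (1 - 1 / t) / real q" by simp
    then have "(1 / real q) * (1 - 1 / t) * real (card U) \<le> real N" using f2 by (simp add: mult.commute)
    then show ?thesis using Upos by (simp add: pos_le_divide_eq)
  qed
  ultimately show ?thesis by simp
qed
end
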